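(* Let $r>0$ and $k\geq 1$ be an integer. Let $\mathcal N=(G,\beta,r)$ be a multi-path network of length $k$: $G=(V,A)$ is a weakly connected directed multigraph without loops with node set $V=\{v_0,v_1,\dots,v_k\}$, in which every arc joins two consecutive nodes $v_{i-1},v_i$ for some $i\in\{1,\dots,k\}$, and $\beta\in\mathbb{R}^A_{>0}$. For $i=1,\dots,k$ let $A_i$ be the set of arcs joining $v_{i-1}$ and $v_i$, and set $u_i:=\sum_{a\in A_i}\mu_a$, where $\mu_a=\beta_a^{-1/r}$. Let $s=v_0$ and $t=v_k$. Then the effective conductance between $s$ and $t$ in $\mathcal N$ is $$U^{\mathcal N}_{s,t}=\Big(\sum_{i=1}^k u_i^{-r}\Big)^{-1/r}.$$
   Context: A potential-based flow network $\mathcal N=(G,\beta,r)$ consists of a weakly connected directed multigraph $G=(V,A)$ without loops, resistances $\beta\in\mathbb{R}^A_{>0}$ and a degree $r>0$; the conductance of arc $a$ is $\mu_a=\beta_a^{-1/r}$. For a balanced vector $b\in\mathbb{R}^V$ (i.e. $\sum_v b_v=0$), a potential-based $b$-transshipment is a pair $(\pi,f)\in\mathbb{R}^V\times\mathbb{R}^A$ with $\pi_u-\pi_v=\beta_a\,\mathrm{sign}(f_a)|f_a|^r$ for every arc $a=(u,v)$ and $\sum_{a\in\delta^+(v)}f_a-\sum_{a\in\delta^-(v)}f_a=b_v$ for all $v\in V$ (here $\delta^+(v)$, $\delta^-(v)$ are the arcs leaving, resp. entering, $v$). Such a pair exists for every balanced $b$ and is unique up to adding a constant to $\pi$; let $\pi^{\mathcal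 N}(b)$ denote the potential vector normalized to have smallest entry $0$. For distinct $s,t\in V$ let $\chi_{s,t}=\chi_s-\chi_t$ (difference of unit vectors). The effective resistance is $R^{\mathcal N}_{s,t}=\pi^{\mathcal N}_s(\chi_{s,t})-\pi^{\mathcal N}_t(\chi_{s,t})$ and the effective conductance is $U^{\mathcal N}_{s,t}=(R^{\mathcal N}_{s,t})^{-1/r}$. *)

theory Defs
  imports Complex_Main
begin

definition weakly_connected :: "'v set \<Rightarrow> 'a set \<Rightarrow> ('a \<Rightarrow> 'v) \<Rightarrow> ('a \<Rightarrow> 'v) \<Rightarrow> bool" where
  "weakly_connected V A tail head \<longleftrightarrow>
     (\<forall>x\<in>V. \<forall>y\<in>V. (x, y) \<in> ({(tail a, head a) | a. a \<in> A} \<union> {(head a, tail a) | a. a \<in> A})\<^sup>*)"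

definition pb_network :: "'v set \<Rightarrow> 'a set \<Rightarrow> ('a \<Rightarrow> 'v) \<Rightarrow> ('a \<Rightarrow> 'v) \<Rightarrow> ('a \<Rightarrow> real) \<Rightarrow> real \<Rightarrow> bool" where
  "pb_network V A tail head \<beta> r \<longleftrightarrow>
     finite V \<and> V \<noteq> {} \<and> finite A \<and>
     (\<forall>a\<in>A. tail a \<in> V \<and> head a \<in> V \<and> tail a \<noteq> head a) \<and>
     weakly_connected V A tail head \<and>
     (\<forall>a\<in>A. \<beta> a > 0) \<and> r > 0"

definition conductance :: "('a \<Rightarrow> real) \<Rightarrow> real \<Rightarrow> 'a \<Rightarrow> real" where
  "conductance \<beta> r a = \<beta> a powr (-1 / r)"

definition is_pbt :: "'v set \<Rightarrow> 'a set \<Rightarrow> ('a \<Rightarrow> 'v) \<Rightarrow> ('a \<Rightarrow> 'v) \<Rightarrow> ('a \<Rightarrow> real) \<Rightarrow> real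
     \<Rightarrow> ('v \<Rightarrow> real) \<Rightarrow> ('v \<Rightarrow> real) \<Rightarrow> ('a \<Rightarrow> real) \<Rightarrow> bool" where
  "is_pbt V A tail head \<beta> r b \<pi> f \<longleftrightarrow>
     (\<forall>a\<in>A. \<pi> (tail a) - \<pi> (head a) = \<beta> a * sgn (f a) * \<bar>f a\<bar> powr r) \<and>
     (\<forall>v\<in>V. (\<Sum>a\<in>{a\<in>A. tail a = v}. f a) - (\<Sum>a\<in>{a\<in>A. head a = v}. f a) = b v)"

definition pot_N :: "'v set \<Rightarrow> 'a set \<Rightarrow> ('a \<Rightarrow> 'v) \<Rightarrow> ('a \<Rightarrow> 'v) \<Rightarrow> ('a \<Rightarrow> real) \<Rightarrow> real
     \<Rightarrow> ('v \<Rightarrow> real) \<Rightarrow> ('v \<Rightarrow> real)" where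
  "pot_N V A tail head \<beta> r b = (THE \<pi>. (\<exists>f. is_pbt V A tail head \<beta> r b \<pi> f) \<and>
       Min (\<pi> ` V) = 0 \<and> (\<forall>x. x \<notin> V \<longrightarrow> \<pi> x = 0))"

definition chi_st :: "'v \<Rightarrow> 'v \<Rightarrow> 'v \<Rightarrow> real" where
  "chi_st s t = (\<lambda>x. (if x = s then 1 else 0) - (if x = t then 1 else 0))"

definition eff_res :: "'v set \<Rightarrow> 'a set \<Rightarrow> ('a \<Rightarrow> 'v) \<Rightarrow> ('a \<Rightarrow> 'v) \<Rightarrow> ('a \<Rightarrow> real) \<Rightarrow> real
     \<Rightarrow> 'v \<Rightarrow> 'v \<Rightarrow> real" where
  "eff_res V A tail head \<beta> r s t =
     pot_N V A tail head \<beta> r (chi_st s t) s - pot_N V A tail head \<beta> r (chi_st s t) t"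

definition eff_cond :: "'v set \<Rightarrow> 'a set \<Rightarrow> ('a \<Rightarrow> 'v) \<Rightarrow> ('a \<Rightarrow> 'v) \<Rightarrow> ('a \<Rightarrow> real) \<Rightarrow> real
     \<Rightarrow> 'v \<Rightarrow> 'v \<Rightarrow> real" where
  "eff_cond V A tail head \<beta> r s t = eff_res V A tail head \<beta> r s t powr (-1 / r)"

end

theory Submission
  imports Defs
begin

lemma powr_arc_aux:
  fixes \<beta> u r :: real
  assumes "\<beta> > 0" "u > 0" "r > 0"
  shows "\<beta> * ((\<beta> powr (-1/r)) / u) powr r = u powr (-r)"
proof -
  have "((\<beta> powr (-1/r)) / u) powr r = (\<beta> powr (-1/r)) powr r / u powr r"
    using assms by (simp add: powr_divide)
  also have "(\<beta> powr (-1/r)) powr r = \<beta> powr (-1)"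
    using assms by (simp add: powr_powr)
  finally show ?thesis using assms by (simp add: powr_minus field_simps)
qed

lemma powr_inv_aux:
  fixes \<beta> d y r :: real
  assumes "\<beta> > 0" "r > 0" "d = \<beta> * sgn y * \<bar>y\<bar> powr r"
  shows "y = sgn d * \<bar>d\<bar> powr (1/r) * \<beta> powr (-1/r)"
proof -
  have sd: "sgn d = sgn y"
  proof (cases "y = 0")
    case False
    hence "\<bar>y\<bar> powr r > 0" by simp
    thus ?thesis using assms by (simp add: sgn_mult)
  qed (use assms in simp)
  have ad: "\<bar>d\<bar> = \<beta> * \<bar>y\<bar> powr r" using assms by (simp add: abs_mult)
  have "\<bar>d\<bar> powr (1/r) = (\<beta> * \<bar>y\<bar> powr r) powr (1/r)" by (simp add: ad)
  also have "\<dots> = \<beta> powr (1/r) * (\<bar>y\<bar> powr r) powr (1/r)"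
    using assms by (simp add: powr_mult)
  also have "(\<bar>y\<bar> powr r) powr (1/r) = \<bar>y\<bar>"
    using assms by (simp add: powr_powr)
  finally have "\<bar>d\<bar> powr (1/r) = \<beta> powr (1/r) * \<bar>y\<bar>" .
  hence "\<bar>d\<bar> powr (1/r) * \<beta> powr (-1/r) = \<bar>y\<bar> * (\<beta> powr (1/r) * \<beta> powr (-1/r))"
    by simp
  also have "\<beta> powr (1/r) * \<beta> powr (-1/r) = 1"
    using assms by (simp add: powr_add[symmetric])
  finally have "\<bar>d\<bar> powr (1/r) * \<beta> powr (-1/r) = \<bar>y\<bar>" by simp
  thus ?thesis using sd by (metis mult.assoc sgn_mult_abs)
qed

locale mpn =
  fixes V :: "'v set" and A :: "'a set" and tail head :: "'a \<Rightarrow> 'v"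
    and \<beta> :: "'a \<Rightarrow> real" and r :: real and k :: nat and vs :: "nat \<Rightarrow> 'v"
  assumes net: "pb_network V A tail head \<beta> r"
    and k1: "k \<ge> 1"
    and inj: "inj_on vs {0..k}"
    and Vdef: "V = vs ` {0..k}"
    and arcs: "\<forall>a\<in>A. \<exists>i\<in>{1..k}. (tail a = vs (i - 1) \<and> head a = vs i) \<or> (tail a = vs i \<and> head a = vs (i - 1))"
begin

lemma finA: "finite A" using net by (simp add: pb_network_def)
lemma rpos: "r > 0" using net by (simp add: pb_network_def)
lemma betapos: "a \<in> A \<Longrightarrow> \<beta> a > 0" using net by (simp add: pb_network_def)

lemma vs_eq: "i \<le> k \<Longrightarrow> j \<le> k \<Longrightarrow> vs i = vs j \<longleftrightarrow> i = j"
  using inj by (auto simp: inj_on_eq_iff)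

definition L where "L i = {a\<in>A. {tail a, head a} = {vs i, vs (Suc i)}}"

lemma L_sub: "L i \<subseteq> A" by (auto simp: L_def)
lemma finL: "finite (L i)" using finA L_sub finite_subset by blast

lemma L_cases: "a \<in> L i \<Longrightarrow> (tail a = vs i \<and> head a = vs (Suc i)) \<or> (tail a = vs (Suc i) \<and> head a = vs i)"
  by (auto simp: L_def doubleton_eq_iff)

lemma arc_layer: "a \<in> A \<Longrightarrow> \<exists>i<k. a \<in> L i"
proof -
  assume a: "a \<in> A"
  then obtain i where i: "i \<in> {1..k}" and h: "(tail a = vs (i - 1) \<and> head a = vs i) \<or> (tail a = vs i \<and> head a = vs (i - 1))"
    using arcs by blast
  have "Suc (i - 1) = i" using i by auto
  hence "a \<in> L (i - 1)" using a h by (auto simp: L_def)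
  thus ?thesis using i by (intro exI[of _ "i - 1"]) auto
qed

lemma layer_unique: "a \<in> L i \<Longrightarrow> a \<in> L j \<Longrightarrow> i < k \<Longrightarrow> j < k \<Longrightarrow> i = j"
proof -
  assume a: "a \<in> L i" "a \<in> L j" "i < k" "j < k"
  hence "{vs i, vs (Suc i)} = {vs j, vs (Suc j)}" by (auto simp: L_def)
  hence "(vs i = vs j \<and> vs (Suc i) = vs (Suc j)) \<or> (vs i = vs (Suc j) \<and> vs (Suc i) = vs j)"
    by (simp add: doubleton_eq_iff)
  thus "i = j"
  proof
    assume "vs i = vs j \<and> vs (Suc i) = vs (Suc j)"
    thus ?thesis using a(3,4) vs_eq[of i j] by simp
  next
    assume h: "vs i = vs (Suc j) \<and> vs (Suc i) = vs j"
    hence "i = Suc j" "Suc i = j" using a(3,4) vs_eq[of i "Suc j"] vs_eq[of "Suc i" j] by auto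
    thus ?thesis by simp
  qed
qed

lemma A_Union: "A = (\<Union>i\<in>{..<k}. L i)"
  using arc_layer L_sub by blast

lemma sum_A: "(\<Sum>a\<in>A. g a) = (\<Sum>i<k. \<Sum>a\<in>L i. g a)"
proof -
  have "(\<Sum>a\<in>(\<Union>i\<in>{..<k}. L i). g a) = (\<Sum>i<k. \<Sum>a\<in>L i. g a)"
    by (rule sum.UNION_disjoint) (auto simp: finL dest: layer_unique)
  thus ?thesis using A_Union by simp
qed

definition e :: "('a \<Rightarrow> real) \<Rightarrow> nat \<Rightarrow> 'a \<Rightarrow> real" where "e f i a = (if tail a = vs i then f a else - f a)"
definition F :: "('a \<Rightarrow> real) \<Rightarrow> nat \<Rightarrow> real" where "F f i = (\<Sum>a\<in>L i. e f i a)"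

lemma arc_term:
  fixes f :: "'a \<Rightarrow> real"
  assumes "a \<in> L i" "i < k" "j \<le> k"
  shows "(if tail a = vs j then f a else 0) - (if head a = vs j then f a else 0) =
     ((if i = j then 1 else 0) - (if Suc i = j then 1 else 0)) * e f i a"
proof -
  have e1: "vs i = vs j \<longleftrightarrow> i = j" and e2: "vs (Suc i) = vs j \<longleftrightarrow> Suc i = j"
    and e3: "vs (Suc i) \<noteq> vs i"
    using assms vs_eq[of i j] vs_eq[of "Suc i" j] vs_eq[of "Suc i" i] by auto
  from L_cases[OF assms(1)] show ?thesis
  proof
    assume h: "tail a = vs i \<and> head a = vs (Suc i)"
    thus ?thesis using e1 e2 by (auto simp: e_def)
  next
    assume h: "tail a = vs (Suc i) \<and> head a = vs i"
    thus ?thesis using e1 e2 e3 by (auto simp: e_def)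
  qed
qed

lemma node_sum:
  fixes f :: "'a \<Rightarrow> real"
  assumes "j \<le> k"
  shows "(\<Sum>a\<in>{a\<in>A. tail a = vs j}. f a) - (\<Sum>a\<in>{a\<in>A. head a = vs j}. f a) =
    (\<Sum>i<k. ((if i = j then 1 else 0) - (if Suc i = j then 1 else 0)) * F f i)"
proof -
  have "(\<Sum>a\<in>{a\<in>A. tail a = vs j}. f a) - (\<Sum>a\<in>{a\<in>A. head a = vs j}. f a) =
     (\<Sum>a\<in>A. (if tail a = vs j then f a else 0) - (if head a = vs j then f a else 0))"
    using finA by (simp add: sum.inter_filter sum_subtractf)
  also have "\<dots> = (\<Sum>i<k. \<Sum>a\<in>L i. (if tail a = vs j then f a else 0) - (if head a = vs j then f a else 0))"
    by (rule sum_A)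
  also have "\<dots> = (\<Sum>i<k. \<Sum>a\<in>L i. ((if i = j then 1 else 0) - (if Suc i = j then 1 else 0)) * e f i a)"
    by (intro sum.cong refl) (use arc_term assms in auto)
  also have "\<dots> = (\<Sum>i<k. ((if i = j then 1 else 0) - (if Suc i = j then 1 else 0)) * F f i)"
    by (simp add: F_def sum_distrib_left)
  finally show ?thesis .
qed

lemma tele:
  fixes G :: "nat \<Rightarrow> real"
  shows "(\<Sum>i<k. ((if i = j then 1 else 0) - (if Suc i = j then 1 else 0)) * G i) =
    (if j < k then G j else 0) - (if j \<ge> 1 \<and> j \<le> k then G (j - 1) else 0)"
proof -
  have "(\<Sum>i<k. ((if i = j then 1 else 0) - (if Suc i = j then 1 else 0)) * G i) =
     (\<Sum>i<k. (if i = j then G i else 0)) - (\<Sum>i<k. (if i = j - 1 \<and> j \<ge> 1 then G i else 0))"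
    unfolding sum_subtractf[symmetric] by (intro sum.cong refl) auto
  also have "\<dots> = (if j < k then G j else 0) - (if j \<ge> 1 \<and> j \<le> k then G (j - 1) else 0)"
  proof (cases "j \<ge> 1")
    case True
    have "(\<Sum>i<k. (if i = j - 1 \<and> j \<ge> 1 then G i else 0)) = (\<Sum>i<k. (if i = j - 1 then G i else 0))"
      using True by simp
    also have "\<dots> = (if j - 1 < k then G (j - 1) else 0)" by (simp add: sum.delta)
    finally show ?thesis using True by (cases "j \<le> k") (auto simp: sum.delta)
  next
    case False thus ?thesis by (simp add: sum.delta)
  qed
  finally show ?thesis .
qed

definition mu where "mu a = conductance \<beta> r a"
lemma mu_pos: "a \<in> A \<Longrightarrow> mu a > 0" using betapos[of a] by (simp add: mu_def conductance_def)

definition u where "u i = (\<Sum>a\<in>L i. mu a)"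

lemma L_ne: assumes "j < k" shows "L j \<noteq> {}"
proof
  assume emp: "L j = {}"
  define R where "R = {(tail a, head a) | a. a \<in> A} \<union> {(head a, tail a) | a. a \<in> A}"
  define S where "S = vs ` {0..j}"
  have stepS: "z \<in> S" if yS: "y \<in> S" and yzR: "(y, z) \<in> R" for y z
  proof -
    obtain a where a: "a \<in> A" "(y = tail a \<and> z = head a) \<or> (y = head a \<and> z = tail a)"
      using yzR by (auto simp: R_def)
    obtain i where i: "i < k" "a \<in> L i" using arc_layer a(1) by blast
    have ij: "i \<noteq> j" using i emp by auto
    obtain m where m: "m \<le> j" "y = vs m" using yS by (auto simp: S_def)
    have yz: "(y = vs i \<and> z = vs (Suc i)) \<or> (y = vs (Suc i) \<and> z = vs i)"
      using L_cases[OF i(2)] a(2) by auto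
    thus ?thesis
    proof
      assume h: "y = vs i \<and> z = vs (Suc i)"
      hence "m = i" using m vs_eq[of m i] i assms by auto
      thus ?thesis using h m ij by (auto simp: S_def)
    next
      assume h: "y = vs (Suc i) \<and> z = vs i"
      hence "m = Suc i" using m vs_eq[of m "Suc i"] i assms by auto
      thus ?thesis using h m by (auto simp: S_def)
    qed
  qed
  have wc: "(vs 0, vs k) \<in> R\<^sup>*"
    using net Vdef by (auto simp: pb_network_def weakly_connected_def R_def)
  have "\<And>y. (vs 0, y) \<in> R\<^sup>* \<Longrightarrow> y \<in> S"
  proof -
    fix y assume "(vs 0, y) \<in> R\<^sup>*"
    thus "y \<in> S"
    proof (induction rule: rtrancl_induct)
      case base thus ?case by (auto simp: S_def)
    next
      case (step y z) thus ?case using stepS by blast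
    qed
  qed
  from this[OF wc] obtain m where "m \<le> j" "vs k = vs m" by (auto simp: S_def)
  thus False using vs_eq[of k m] assms by auto
qed

lemma u_pos: "i < k \<Longrightarrow> u i > 0"
  unfolding u_def by (rule sum_pos[OF finL]) (use L_ne L_sub mu_pos in blast)+

definition D where "D i = u i powr (-r)"
definition P where "P j = (\<Sum>i\<in>{j..<k}. D i)"

lemma P_nonneg: "P j \<ge> 0" unfolding P_def D_def by (intro sum_nonneg) auto
lemma P_k: "P k = 0" by (simp add: P_def)
lemma P_step: "j < k \<Longrightarrow> P j = D j + P (Suc j)" by (simp add: P_def sum.atLeast_Suc_lessThan)

definition lay where "lay a = (THE i. i < k \<and> a \<in> L i)"
lemma lay_eq: "a \<in> L i \<Longrightarrow> i < k \<Longrightarrow> lay a = i"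
  unfolding lay_def by (rule the_equality) (auto dest: layer_unique)
lemma lay_A: "a \<in> A \<Longrightarrow> lay a < k \<and> a \<in> L (lay a)"
  using arc_layer lay_eq by blast

definition pi0 where "pi0 x = (if x \<in> V then P (inv_into {0..k} vs x) else 0)"
lemma pi0_vs: "j \<le> k \<Longrightarrow> pi0 (vs j) = P j"
proof -
  assume j: "j \<le> k"
  hence "vs j \<in> V" using Vdef by auto
  moreover have "inv_into {0..k} vs (vs j) = j" using inj j by (simp add: inv_into_f_f)
  ultimately show ?thesis by (simp add: pi0_def)
qed

definition f0 where "f0 a = (if tail a = vs (lay a) then 1 else -1) * mu a / u (lay a)"

lemma F_f0: "i < k \<Longrightarrow> F f0 i = 1"
proof -
  assume i: "i < k"
  have "F f0 i = (\<Sum>a\<in>L i. mu a / u i)"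
    unfolding F_def by (intro sum.cong refl) (auto simp: e_def f0_def lay_eq[OF _ i])
  also have "\<dots> = 1" using u_pos[OF i] by (simp add: sum_divide_distrib[symmetric] u_def)
  finally show ?thesis .
qed

lemma chi_vs: "j \<le> k \<Longrightarrow> chi_st (vs 0) (vs k) (vs j) = (if j = 0 then 1 else 0) - (if j = k then 1 else 0)"
  using vs_eq[of j 0] vs_eq[of j k] by (simp add: chi_st_def)

lemma node_eq: fixes f :: "'a \<Rightarrow> real" shows "j \<le> k \<Longrightarrow> (\<Sum>a\<in>{a\<in>A. tail a = vs j}. f a) - (\<Sum>a\<in>{a\<in>A. head a = vs j}. f a) =
    (if j < k then F f j else 0) - (if j \<ge> 1 \<and> j \<le> k then F f (j - 1) else 0)"
  using node_sum tele by simp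

lemma pbt0: "is_pbt V A tail head \<beta> r (chi_st (vs 0) (vs k)) pi0 f0"
  unfolding is_pbt_def
proof (intro conjI ballI)
  fix a assume a: "a \<in> A"
  define i where "i = lay a"
  have i: "i < k" "a \<in> L i" using lay_A[OF a] by (auto simp: i_def)
  have up: "u i > 0" using u_pos i by auto
  have ar: "\<beta> a * ((\<beta> a powr (-1/r)) / u i) powr r = D i"
    using powr_arc_aux[OF betapos[OF a] up rpos] by (simp add: D_def)
  have mp: "mu a > 0" using mu_pos a by auto
  from L_cases[OF i(2)] show "pi0 (tail a) - pi0 (head a) = \<beta> a * sgn (f0 a) * \<bar>f0 a\<bar> powr r"
  proof
    assume h: "tail a = vs i \<and> head a = vs (Suc i)"
    have "f0 a = mu a / u i" using h by (simp add: f0_def i_def[symmetric])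
    thus ?thesis using h i mp up ar pi0_vs P_step[of i]
      by (simp add: mu_def conductance_def)
  next
    assume h: "tail a = vs (Suc i) \<and> head a = vs i"
    have ne: "vs (Suc i) \<noteq> vs i" using vs_eq[of "Suc i" i] i by auto
    have "f0 a = - (mu a / u i)" using h ne by (simp add: f0_def i_def[symmetric])
    thus ?thesis using h i mp up ar pi0_vs P_step[of i]
      by (simp add: mu_def conductance_def)
  qed
next
  fix v assume "v \<in> V"
  then obtain j where j: "j \<le> k" "v = vs j" using Vdef by auto
  show "(\<Sum>a\<in>{a\<in>A. tail a = v}. f0 a) - (\<Sum>a\<in>{a\<in>A. head a = v}. f0 a) = chi_st (vs 0) (vs k) v"
    using node_eq[OF j(1), of f0] chi_vs[OF j(1)] j F_f0 k1 by auto
qed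

lemma Min0: "Min (pi0 ` V) = 0"
proof (rule Min_eqI)
  show "finite (pi0 ` V)" using Vdef by simp
  show "\<And>y. y \<in> pi0 ` V \<Longrightarrow> 0 \<le> y" using Vdef pi0_vs P_nonneg by auto
  show "0 \<in> pi0 ` V" using Vdef pi0_vs[of k] P_k by force
qed

lemma unique:
  assumes pbt: "is_pbt V A tail head \<beta> r (chi_st (vs 0) (vs k)) \<pi> f"
    and mn: "Min (\<pi> ` V) = 0" and out: "\<forall>x. x \<notin> V \<longrightarrow> \<pi> x = 0"
  shows "\<pi> = pi0"
proof -
  have arc: "\<And>a. a \<in> A \<Longrightarrow> \<pi> (tail a) - \<pi> (head a) = \<beta> a * sgn (f a) * \<bar>f a\<bar> powr r"
    and nd: "\<And>v. v \<in> V \<Longrightarrow> (\<Sum>a\<in>{a\<in>A. tail a = v}. f a) - (\<Sum>a\<in>{a\<in>A. head a = v}. f a) = chi_st (vs 0) (vs k) v"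
    using pbt by (auto simp: is_pbt_def)
  have nd': "(if j < k then F f j else 0) - (if j \<ge> 1 \<and> j \<le> k then F f (j - 1) else 0) =
      (if j = 0 then 1 else 0) - (if j = k then 1 else 0)" if "j \<le> k" for j
    using nd[of "vs j"] node_eq[OF that, of f] chi_vs[OF that] Vdef that by auto
  have F1: "i < k \<Longrightarrow> F f i = 1" for i
  proof (induction i)
    case 0 thus ?case using nd'[of 0] by simp
  next
    case (Suc i) thus ?case using nd'[of "Suc i"] by simp
  qed
  define d where "d i = \<pi> (vs i) - \<pi> (vs (Suc i))" for i
  have dD: "d i = D i" if i: "i < k" for i
  proof -
    define c where "c = sgn (d i) * \<bar>d i\<bar> powr (1/r)"
    have "e f i a = c * mu a" if a: "a \<in> L i" for a
    proof -
      have aA: "a \<in> A" using a L_sub by auto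
      from L_cases[OF a] show ?thesis
      proof
        assume h: "tail a = vs i \<and> head a = vs (Suc i)"
        have "d i = \<beta> a * sgn (f a) * \<bar>f a\<bar> powr r" using arc[OF aA] h by (simp add: d_def)
        from powr_inv_aux[OF betapos[OF aA] rpos this] show ?thesis
          using h by (simp add: e_def c_def mu_def conductance_def)
      next
        assume h: "tail a = vs (Suc i) \<and> head a = vs i"
        have ne: "vs (Suc i) \<noteq> vs i" using vs_eq[of "Suc i" i] i by auto
        have "- d i = \<beta> a * sgn (f a) * \<bar>f a\<bar> powr r" using arc[OF aA] h by (simp add: d_def)
        from powr_inv_aux[OF betapos[OF aA] rpos this] show ?thesis
          using h ne by (simp add: e_def c_def mu_def conductance_def sgn_minus)
      qed
    qed
    hence "F f i = c * u i" by (simp add: F_def u_def sum_distrib_left)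
    hence cu: "c * u i = 1" using F1 i by simp
    have up: "u i > 0" using u_pos i by simp
    have dpos: "d i > 0"
    proof (rule ccontr)
      assume "\<not> d i > 0"
      hence "c \<le> 0" by (auto simp: c_def sgn_if)
      hence "c * u i \<le> 0" using up by (simp add: mult_nonpos_nonneg)
      thus False using cu by simp
    qed
    hence "d i powr (1/r) = 1 / u i" using cu up by (simp add: c_def field_simps)
    hence "(d i powr (1/r)) powr r = (1 / u i) powr r" by simp
    hence "d i = (1 / u i) powr r" using dpos rpos by (simp add: powr_powr)
    thus ?thesis using up by (simp add: D_def powr_minus powr_divide inverse_eq_divide)
  qed
  have pot: "\<pi> (vs j) = \<pi> (vs k) + P j" if "j \<le> k" for j
    using that
  proof (induction rule: inc_induct)
    case base thus ?case by (simp add: P_k)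
  next
    case (step n)
    thus ?case using dD[of n] P_step[of n] by (simp add: d_def)
  qed
  have pk: "\<pi> (vs k) = 0"
  proof -
    have fin: "finite (\<pi> ` V)" using Vdef by simp
    have "Min (\<pi> ` V) \<le> \<pi> (vs k)" using fin Vdef by (intro Min_le) auto
    hence ge: "0 \<le> \<pi> (vs k)" using mn by simp
    have "Min (\<pi> ` V) \<in> \<pi> ` V" using fin Vdef by (intro Min_in) auto
    hence "0 \<in> \<pi> ` V" by (simp only: mn)
    then obtain x where "x \<in> V" "0 = \<pi> x" by (rule imageE)
    then obtain j where "j \<le> k" "\<pi> (vs j) = 0" unfolding Vdef by force
    hence "\<pi> (vs k) + P j = 0" using pot[of j] by simp
    thus ?thesis using ge P_nonneg[of j] by simp
  qed
  show ?thesis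
  proof
    fix x show "\<pi> x = pi0 x"
    proof (cases "x \<in> V")
      case True then obtain j where "j \<le> k" "x = vs j" using Vdef by auto
      thus ?thesis using pot pk pi0_vs by simp
    next
      case False thus ?thesis using out by (simp add: pi0_def)
    qed
  qed
qed

lemma potN: "pot_N V A tail head \<beta> r (chi_st (vs 0) (vs k)) = pi0"
  unfolding pot_N_def
proof (rule the_equality)
  show "(\<exists>f. is_pbt V A tail head \<beta> r (chi_st (vs 0) (vs k)) pi0 f) \<and> Min (pi0 ` V) = 0 \<and> (\<forall>x. x \<notin> V \<longrightarrow> pi0 x = 0)"
    using pbt0 Min0 by (auto simp: pi0_def)
  show "\<And>\<pi>. (\<exists>f. is_pbt V A tail head \<beta> r (chi_st (vs 0) (vs k)) \<pi> f) \<and> Min (\<pi> ` V) = 0 \<and> (\<forall>x. x \<notin> V \<longrightarrow> \<pi> x = 0) \<Longrightarrow> \<pi> = pi0"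
    using unique by blast
qed

lemma main: "eff_cond V A tail head \<beta> r (vs 0) (vs k) =
    (\<Sum>i=1..k. (\<Sum>a\<in>{a\<in>A. {tail a, head a} = {vs (i - 1), vs i}}. conductance \<beta> r a) powr (- r)) powr (-1 / r)"
proof -
  have "eff_res V A tail head \<beta> r (vs 0) (vs k) = P 0"
    unfolding eff_res_def potN using pi0_vs[of 0] pi0_vs[of k] P_k by simp
  moreover have "P 0 = (\<Sum>i=1..k. (\<Sum>a\<in>{a\<in>A. {tail a, head a} = {vs (i - 1), vs i}}. conductance \<beta> r a) powr (- r))"
    by (simp add: P_def D_def u_def L_def mu_def sum.atLeast1_atMost_eq[simplified] atLeast0LessThan)
  ultimately show ?thesis by (simp add: eff_cond_def)
qed

end

theorem lemma2:
  fixes V :: "'v set" and A :: "'a set" and tail head :: "'a \<Rightarrow> 'v"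
    and \<beta> :: "'a \<Rightarrow> real" and r :: real and k :: nat and vs :: "nat \<Rightarrow> 'v"
  assumes "pb_network V A tail head \<beta> r"
    and "k \<ge> 1"
    and "inj_on vs {0..k}"
    and "V = vs ` {0..k}"
    and "\<forall>a\<in>A. \<exists>i\<in>{1..k}. (tail a = vs (i - 1) \<and> head a = vs i) \<or> (tail a = vs i \<and> head a = vs (i - 1))"
  shows "eff_cond V A tail head \<beta> r (vs 0) (vs k) =
    (\<Sum>i=1..k. (\<Sum>a\<in>{a\<in>A. {tail a, head a} = {vs (i - 1), vs i}}. conductance \<beta> r a) powr (- r)) powr (-1 / r)"
proof -
  interpret mpn V A tail head \<beta> r k vs using assms by unfold_locales
  show ?thesis by (rule main)
qed

end
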